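(* Let $f,g\in\mathbb{R}[X]$, not both zero, and $\gamma\in\Gamma$ be such that $f/\gamma$ and $g/\gamma$ lie in $D$. Let $M=\gcd(f,g)$ and write $f=Mf'$, $g=Mg'$. Then the ideal $(f/\gamma,\,g/\gamma)$ of $D$ is not principal if and only if $s=\max\{\deg f',\deg g'\}$ is odd.
   Context: $D$ denotes the minimal Dress ring of the field $\mathbb{R}(X)$, i.e. the subring of $\mathbb{R}(X)$ generated by $\mathbb{Z}$ and all elements $1/(1+h^2)$ with $h\in\mathbb{R}(X)$. $\Gamma$ denotes the set of polynomials in $\mathbb{R}[X]$ having no real root (nonzero constants included). *)

theory Defs
  imports "HOL-Computational_Algebra.Computational_Algebra" "HOL-Computational_Algebra.Field_as_Ring"
begin

type_synonym ratfun = "real poly fract"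

inductive_set dress_ring :: "ratfun set" where
  int:  "of_int n \<in> dress_ring"
| gen:  "1 / (1 + h\<^sup>2) \<in> dress_ring"
| add:  "a \<in> dress_ring \<Longrightarrow> b \<in> dress_ring \<Longrightarrow> a + b \<in> dress_ring"
| neg:  "a \<in> dress_ring \<Longrightarrow> - a \<in> dress_ring"
| mult: "a \<in> dress_ring \<Longrightarrow> b \<in> dress_ring \<Longrightarrow> a * b \<in> dress_ring"

text \<open>Gamma: real polynomials without real root (this excludes the zero polynomial,
  includes nonzero constants).\<close>
definition Gamma :: "real poly set" where
  "Gamma = {p. \<forall>x::real. poly p x \<noteq> 0}"

definition dress_ideal2 :: "ratfun \<Rightarrow> ratfun \<Rightarrow> ratfun set" where
  "dress_ideal2 u v = {a * u + b * v | a b. a \<in> dress_ring \<and> b \<in> dress_ring}"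

definition dress_principal :: "ratfun set \<Rightarrow> bool" where
  "dress_principal I \<longleftrightarrow> (\<exists>c\<in>dress_ring. I = {a * c | a. a \<in> dress_ring})"

end

theory Submission
  imports Defs
begin


abbreviation D where "D \<equiv> dress_ring"

lemma D_0: "0 \<in> D" using dress_ring.int[of 0] by simp
lemma D_1: "1 \<in> D" using dress_ring.int[of 1] by simp
lemma D_diff: "a \<in> D \<Longrightarrow> b \<in> D \<Longrightarrow> a - b \<in> D"
  using dress_ring.add[OF _ dress_ring.neg] by (metis diff_conv_add_uminus)

lemma to_fract_inv_const: "w \<noteq> 0 \<Longrightarrow> to_fract [:1/w:] = 1 / to_fract [:w::real:]"
proof -
  assume w: "w \<noteq> 0"
  have "to_fract [:1/w:] * to_fract [:w:] = 1"
  proof -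
    have "[:1/w:] * [:w:] = (1::real poly)" using w by (simp add: one_pCons)
    then show ?thesis by (metis to_fract_mult to_fract_1)
  qed
  moreover have "to_fract [:w:] \<noteq> 0" using w by simp
  ultimately show ?thesis by (simp add: field_simps)
qed

lemma D_const_01: assumes "0 < r" "r \<le> (1::real)" shows "to_fract [:r:] \<in> D"
proof -
  define s where "s = sqrt (1/r - 1)"
  have s2: "s^2 = 1/r - 1" unfolding s_def using assms by simp
  have "1 + s^2 = 1/r" using s2 by simp
  then have r: "r = 1 / (1 + s^2)" by simp
  have "1 + (to_fract [:s:])\<^sup>2 = to_fract [:1 + s^2:]"
    by (simp add: power2_eq_square flip: to_fract_mult to_fract_1 to_fract_add) (simp add: one_pCons)
  moreover have "1 + s^2 \<noteq> 0" by (metis add_pos_nonneg not_less_iff_gr_or_eq zero_le_power2 zero_less_one)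
  ultimately have "1 / (1 + (to_fract [:s:])\<^sup>2) = to_fract [:r:]"
    using r to_fract_inv_const by metis
  then show ?thesis using dress_ring.gen by metis
qed

lemma D_const_nat: assumes "to_fract [:x:] \<in> D" shows "to_fract [:of_nat n * x:] \<in> D"
proof (induction n)
  case 0 then show ?case using D_0 by simp
next
  case (Suc n)
  have "to_fract [:of_nat (Suc n) * x:] = to_fract [:x:] + to_fract [:of_nat n * x:]"
    by (simp add: algebra_simps flip: to_fract_add)
  then show ?case using dress_ring.add[OF assms Suc] by simp
qed

lemma D_const: "to_fract [:r::real:] \<in> D"
proof -
  have pos: "to_fract [:r:] \<in> D" if "r > 0" for r :: real
  proof -
    define n where "n = nat \<lceil>r\<rceil>"
    have n: "real n \<ge> r" "n > 0" unfolding n_def using that by linarith+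
    have "to_fract [:r / n:] \<in> D" using n that by (intro D_const_01) (auto simp: field_simps)
    from D_const_nat[OF this, of n] show ?thesis using n by simp
  qed
  consider "r > 0" | "r = 0" | "r < 0" by linarith
  then show ?thesis
  proof cases
    case 3 then have "to_fract [:-r:] \<in> D" by (intro pos) simp
    then have "- to_fract [:-r:] \<in> D" by (rule dress_ring.neg)
    moreover have "- to_fract [:-r:] = to_fract [:r:]"
      by (metis to_fract_uminus minus_pCons minus_minus minus_zero)
    ultimately show ?thesis by simp
  qed (use pos D_0 in auto)
qed

lemma D_smult: "to_fract P / to_fract Q \<in> D \<Longrightarrow> to_fract (smult r P) / to_fract Q \<in> D"
proof -
  assume "to_fract P / to_fract Q \<in> D"
  from dress_ring.mult[OF D_const[of r] this] show ?thesis
    by (simp flip: to_fract_mult)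
qed

lemma D_add_num: "to_fract P / to_fract Q \<in> D \<Longrightarrow> to_fract P' / to_fract Q \<in> D \<Longrightarrow> to_fract (P + P') / to_fract Q \<in> D"
  using dress_ring.add by (simp add: add_divide_distrib)



abbreviation cp :: "real poly \<Rightarrow> complex poly" where "cp p \<equiv> map_poly complex_of_real p"

lemma cp_add: "cp (p + q) = cp p + cp q"
  by (rule poly_eqI) (simp add: coeff_map_poly)

lemma cp_mult: "cp (p * q) = cp p * cp q"
  by (rule poly_eqI) (simp add: coeff_map_poly coeff_mult)

lemma poly_cp_real: "poly (cp p) (of_real x) = of_real (poly p x)"
  by (induction p) (simp_all add: map_poly_pCons)

lemma Gamma_nonzero: "E \<in> Gamma \<Longrightarrow> E \<noteq> 0"
  unfolding Gamma_def by auto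

lemma quad_factor:
  assumes "Q \<in> Gamma" "degree Q > 0"
  shows "\<exists>a b S. b \<noteq> 0 \<and> Q = [:a^2+b^2, -2*a, 1:] * S"
proof -
  have "degree (cp Q) = degree Q" by (simp add: degree_map_poly)
  then have "\<not> (\<exists>a l. a \<noteq> 0 \<and> l = 0 \<and> cp Q = pCons a l)" using assms(2) by auto
  then obtain z where z: "poly (cp Q) z = 0" using fundamental_theorem_of_algebra_alt by blast
  define a where "a = Re z"
  define b where "b = Im z"
  have "b \<noteq> 0"
  proof
    assume "b = 0"
    then have "z = of_real a" unfolding a_def b_def by (simp add: complex_eq_iff)
    then have "poly Q a = 0" using z poly_cp_real by (metis of_real_eq_0_iff)
    then show False using assms(1) unfolding Gamma_def by auto
  qed
  define q where "q = [:a^2+b^2, -2*a, 1:]"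
  have q0: "q \<noteq> 0" unfolding q_def by simp
  have dq: "degree q = 2" unfolding q_def by simp
  have pq: "poly (cp q) z = 0"
    unfolding q_def by (simp add: map_poly_pCons complex_eq_iff a_def b_def power2_eq_square algebra_simps)
  define R where "R = Q mod q"
  define S where "S = Q div q"
  have QSR: "Q = q * S + R" unfolding R_def S_def by simp
  have "degree R \<le> 1"
    using degree_mod_less[OF q0, of Q] dq unfolding R_def by auto
  then have R: "R = [:coeff R 0, coeff R 1:]"
    by (intro poly_eqI) (auto simp: coeff_pCons split: nat.split intro!: coeff_eq_0)
  have "poly (cp R) z = 0" using z pq QSR by (metis cp_add cp_mult poly_add poly_mult mult_zero_left add_0)
  then have "poly (cp [:coeff R 0, coeff R 1:]) z = 0" using R by simp
  then have "coeff R 0 + coeff R 1 * a = 0 \<and> coeff R 1 * b = 0"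
    by (simp add: map_poly_pCons complex_eq_iff a_def b_def mult.commute)
  then have "R = 0" using R \<open>b \<noteq> 0\<close> by auto
  then show ?thesis using QSR \<open>b \<noteq> 0\<close> q_def by auto
qed

lemma quad_Gamma: "b \<noteq> 0 \<Longrightarrow> [:a^2+b^2, -2*a, 1:] \<in> Gamma"
proof -
  assume b: "b \<noteq> (0::real)"
  have "poly [:a^2+b^2, -2*a, 1:] x = (x - a)^2 + b^2" for x
    by (simp add: power2_eq_square algebra_simps)
  moreover have "(x - a)^2 + b^2 > 0" for x using b by (simp add: add_nonneg_pos)
  ultimately show ?thesis unfolding Gamma_def mem_Collect_eq by (metis less_irrefl)
qed

lemma Gamma_factor: "Q \<in> Gamma \<Longrightarrow> Q = P * S \<Longrightarrow> S \<in> Gamma"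
  unfolding Gamma_def by auto

lemma Gamma_even: "Q \<in> Gamma \<Longrightarrow> even (degree Q)"
proof (induction "degree Q" arbitrary: Q rule: less_induct)
  case less
  show ?case
  proof (cases "degree Q = 0")
    case False
    then obtain a b S where ab: "b \<noteq> 0" "Q = [:a^2+b^2, -2*a, 1:] * S"
      using quad_factor less.prems by blast
    have S: "S \<in> Gamma" using Gamma_factor less.prems ab(2) by blast
    have "degree Q = degree [:a^2+b^2, -2*a, 1:] + degree S" unfolding ab(2)
      by (rule degree_mult_eq) (simp_all add: Gamma_nonzero[OF S])
    then have "degree Q = 2 + degree S" by simp
    with less.hyps[of S] S show ?thesis by simp
  qed simp
qed



lemma to_fract_const_mult: "to_fract [:x*y:] = to_fract [:x:] * to_fract [:y::real:]"
proof -
  have "[:x:]*[:y:] = [:x*y:]" by simp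
  then show ?thesis by (metis to_fract_mult)
qed

lemma quad_D:
  assumes b: "b \<noteq> 0" and dU: "degree U \<le> 2"
  shows "to_fract U / to_fract [:a^2+b^2, -2*a, 1:] \<in> D"
proof -
  define q where "q = [:a^2+b^2, -2*a, 1:]"
  define T where "T = [:-a, 1::real:]"
  define t where "t = to_fract T"
  define B where "B = to_fract [:b:]"
  have qT: "q = T^2 + [:b:]^2" unfolding q_def T_def by (simp add: power2_eq_square algebra_simps)
  have tq: "to_fract q = t^2 + B^2" unfolding qT t_def B_def by (simp add: power2_eq_square to_fract_const_mult)
  have q0: "to_fract q \<noteq> 0" unfolding q_def by simp
  have B0: "B \<noteq> 0" unfolding B_def using b by simp
  have Bt0: "B + t \<noteq> 0"
  proof -
    have "B + t = to_fract [:b - a, 1:]" unfolding B_def t_def T_def by (simp flip: to_fract_add)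
    then show ?thesis by simp
  qed
  have invB2: "1 / B^2 \<in> D"
    using D_const[of "1/b^2"] to_fract_inv_const[of "b^2"] b unfolding B_def
    by (simp add: power2_eq_square flip: to_fract_mult)
  have g1: "1 / (1 + (t / B)^2) \<in> D" by (rule dress_ring.gen)
  have e1: "1 / (1 + (t / B)^2) = B^2 / to_fract q"
    using B0 q0 unfolding tq by (simp add: field_simps)
  have one_q: "1 / to_fract q \<in> D"
  proof -
    have "1 / to_fract q = (1 / B^2) * (1 / (1 + (t / B)^2))" using e1 B0 by simp
    then show ?thesis using dress_ring.mult[OF invB2 g1] by simp
  qed
  have g2: "1 / (1 + ((B - t) / (B + t))^2) \<in> D" by (rule dress_ring.gen)
  have two: "(2::real poly fract) \<noteq> 0"
  proof -
    have "to_fract (2::real poly) = 2" by (metis to_fract_add to_fract_1 one_add_one)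
    moreover have "(2::real poly) \<noteq> 0" by simp
    ultimately show ?thesis by (metis to_fract_eq_0_iff)
  qed
  have sq: "(B+t)^2 + (B-t)^2 = 2*(t^2+B^2)" by (simp add: power2_eq_square algebra_simps)
  have k: "1 + ((B - t)/(B+t))^2 = (2 * to_fract q) / (B+t)^2"
    using Bt0 unfolding tq sq[symmetric] by (simp add: field_simps)
  have e2: "1 / (1 + ((B - t) / (B + t))^2) = (B + t)^2 / (2 * to_fract q)"
    unfolding k by simp
  have invB: "1 / B \<in> D"
    using D_const[of "1/b"] to_fract_inv_const[of "b"] b unfolding B_def by simp
  have half: "1 / 2 \<in> D"
    using dress_ring.gen[of 1] by simp
  have t_q: "t / to_fract q \<in> D"
  proof -
    have w: "(B+t)^2 = to_fract q + 2*(B*t)" unfolding tq by (simp add: power2_eq_square algebra_simps)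
    have "(B+t)^2/(2*to_fract q) - 1/2 = (B*t)/to_fract q" unfolding w using q0 two by (simp add: field_simps)
    then have "t / to_fract q = (1 / (1 + ((B - t) / (B + t))^2) - 1/2) * (1 / B)"
      unfolding e2 using B0 by simp
    then show ?thesis using dress_ring.mult[OF D_diff[OF g2 half] invB] by simp
  qed
  define u2 where "u2 = coeff U 2"
  define c1 where "c1 = coeff U 1 + 2 * a * u2"
  define c0 where "c0 = coeff U 0 - (a^2+b^2) * u2 + a * c1"
  have U: "U = smult u2 q + smult c1 T + [:c0:]"
  proof (rule poly_eqI)
    fix n
    show "coeff U n = coeff (smult u2 q + smult c1 T + [:c0:]) n"
    proof (cases "n \<le> 2")
      case True
      then consider "n = 0" | "n = 1" | "n = 2" by linarith
      then show ?thesis by cases (simp_all add: q_def T_def c0_def c1_def u2_def numeral_2_eq_2)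
    next
      case False
      then have "coeff U n = 0" using dU by (intro coeff_eq_0) simp
      then show ?thesis using False by (simp add: q_def T_def coeff_pCons split: nat.split)
    qed
  qed
  have "to_fract U / to_fract q = to_fract [:u2:] + to_fract [:c1:] * (t / to_fract q) + to_fract [:c0:] * (1 / to_fract q)"
    unfolding U using q0 by (simp add: t_def field_simps flip: to_fract_mult smult_conv_map_poly)
  moreover have "to_fract (smult u2 q) = to_fract [:u2:] * to_fract q"
    by (simp flip: to_fract_mult)
  ultimately have "to_fract U / to_fract q = to_fract [:u2:] + to_fract [:c1:] * (t / to_fract q) + to_fract [:c0:] * (1 / to_fract q)"
    by simp
  then show ?thesis unfolding q_def[symmetric]
    by (metis dress_ring.add dress_ring.mult D_const t_q one_q)
qed



lemma HD: "Q \<in> Gamma \<Longrightarrow> degree P \<le> degree Q \<Longrightarrow> to_fract P / to_fract Q \<in> D"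
proof (induction "degree Q" arbitrary: Q P rule: less_induct)
  case less
  show ?case
  proof (cases "degree Q = 0")
    case True
    then obtain q where q: "Q = [:q:]" using degree_eq_zeroE by blast
    obtain p where p: "P = [:p:]" using less.prems(2) True degree_eq_zeroE by (metis le_zero_eq)
    have "q \<noteq> 0" using Gamma_nonzero[OF less.prems(1)] q by simp
    then have "to_fract P / to_fract Q = to_fract [:p:] * to_fract [:1/q:]"
      using p q to_fract_inv_const[of q] by simp
    then show ?thesis using dress_ring.mult[OF D_const D_const] by metis
  next
    case False
    then obtain a b S where ab: "b \<noteq> 0" "Q = [:a^2+b^2, -2*a, 1:] * S"
      using quad_factor less.prems by blast
    define q where "q = [:a^2+b^2, -2*a, 1:]"
    have S: "S \<in> Gamma" using Gamma_factor less.prems ab(2) by blast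
    have S0: "S \<noteq> 0" using Gamma_nonzero[OF S] .
    have q0: "q \<noteq> 0" unfolding q_def by simp
    have dQ: "degree Q = 2 + degree S" unfolding ab(2) q_def[symmetric]
      using degree_mult_eq[OF q0 S0] by (simp add: q_def)
    define U where "U = P div S"
    define V where "V = P mod S"
    have PUV: "P = S * U + V" unfolding U_def V_def by simp
    have dV: "degree V \<le> degree S"
      using degree_mod_less[OF S0, of P] unfolding V_def by auto
    have dU: "degree U \<le> 2"
    proof (cases "U = 0")
      case False
      have "degree (S * U) = degree (P - V)" using PUV by (simp add: algebra_simps)
      also have "\<dots> \<le> max (degree P) (degree V)" by (rule degree_diff_le_max)
      also have "\<dots> \<le> 2 + degree S" using less.prems(2) dQ dV by simp
      finally show ?thesis using degree_mult_eq[OF S0 False] by simp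
    qed simp
    have IH: "to_fract V / to_fract S \<in> D"
      using less.hyps[of S V] dQ S dV by simp
    have U2: "to_fract U / to_fract q \<in> D" unfolding q_def using quad_D[OF ab(1) dU] .
    have q1: "1 / to_fract q \<in> D" unfolding q_def using quad_D[OF ab(1), of 1] by simp
    have "to_fract P / to_fract Q = to_fract U / to_fract q + (to_fract V / to_fract S) * (1 / to_fract q)"
      unfolding PUV ab(2) q_def[symmetric] using S0 q0 by (simp add: field_simps)
    then show ?thesis using dress_ring.add[OF U2 dress_ring.mult[OF IH q1]] by simp
  qed
qed

definition inH :: "ratfun \<Rightarrow> bool" where
  "inH z \<longleftrightarrow> (\<exists>P E. E \<in> Gamma \<and> degree P \<le> degree E \<and> z = to_fract P / to_fract E)"

lemma Gamma_mult: "E1 \<in> Gamma \<Longrightarrow> E2 \<in> Gamma \<Longrightarrow> E1 * E2 \<in> Gamma"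
  unfolding Gamma_def by auto

lemma sq_coeff:
  fixes r :: "real poly"
  assumes "degree r \<le> m"
  shows "coeff (r^2) (2*m) = (if degree r = m then (lead_coeff r)^2 else 0)"
proof (cases "degree r = m")
  case True
  then show ?thesis using coeff_mult_degree_sum[of r r] by (simp add: power2_eq_square mult_2)
next
  case False
  have "degree (r^2) \<le> 2 * degree r" using degree_mult_le[of r r] by (simp add: power2_eq_square)
  then have "coeff (r^2) (2*m) = 0" using False assms by (intro coeff_eq_0) simp
  then show ?thesis using False by simp
qed

lemma deg_sq_le: "2 * degree (p::real poly) \<le> degree (p^2 + q^2)"
proof (cases "p = 0")
  case False
  define m where "m = max (degree p) (degree q)"
  have cp: "coeff (p^2) (2*m) = (if degree p = m then (lead_coeff p)^2 else 0)"
    by (rule sq_coeff) (simp add: m_def)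
  have cq: "coeff (q^2) (2*m) = (if degree q = m then (lead_coeff q)^2 else 0)"
    by (rule sq_coeff) (simp add: m_def)
  have "coeff (p^2 + q^2) (2*m) > 0"
  proof (cases "degree p = m")
    case True
    have pos: "coeff p m ^2 > 0" using False True[symmetric] by simp
    have nn: "coeff (q^2) (2*m) \<ge> 0" using cq by simp
    have c2: "coeff (p^2) (2*m) > 0" using cp True pos by simp
    show ?thesis using c2 nn by simp
  next
    case F: False
    then have "degree q = m" "q \<noteq> 0" unfolding m_def by auto
    then have pos: "coeff q m ^2 > 0" by (metis leading_coeff_0_iff zero_less_power2)
    have nn: "coeff (p^2) (2*m) \<ge> 0" using cp by simp
    have c2: "coeff (q^2) (2*m) > 0" using cq \<open>degree q = m\<close> pos by simp
    show ?thesis using c2 nn by simp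
  qed
  then have "2 * m \<le> degree (p^2 + q^2)" by (intro le_degree) simp
  then show ?thesis unfolding m_def by simp
qed simp

lemma DH: "z \<in> D \<Longrightarrow> inH z"
proof (induction rule: dress_ring.induct)
  case (int n)
  have "to_fract (of_int n :: real poly) = of_int n"
    by (induction n rule: int_induct[of _ 0]) (simp_all add: algebra_simps)
  then show ?case unfolding inH_def
    by (intro exI[of _ "of_int n"] exI[of _ 1]) (auto simp: Gamma_def)
next
  case (gen h)
  obtain p q where pq: "h = to_fract p / to_fract q" "q \<noteq> 0"
    by (cases h) (auto simp: Fract_conv_to_fract)
  define d where "d = gcd p q"
  define p1 where "p1 = p div d"
  define q1 where "q1 = q div d"
  have d0: "d \<noteq> 0" unfolding d_def using pq by simp
  have p: "p = d * p1" unfolding p1_def d_def by simp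
  have q: "q = d * q1" unfolding q1_def d_def by simp
  have q10: "q1 \<noteq> 0" using q pq by auto
  have cop: "coprime p1 q1" unfolding p1_def q1_def d_def using pq by (intro div_gcd_coprime) simp
  have h: "h = to_fract p1 / to_fract q1" using pq d0 unfolding p q by simp
  define E where "E = q1^2 + p1^2"
  have "E \<in> Gamma" unfolding Gamma_def
  proof (safe)
    fix x assume "poly E x = 0"
    then have "poly q1 x = 0 \<and> poly p1 x = 0" unfolding E_def
      by (simp add: sum_power2_eq_zero_iff)
    then have "[:-x, 1:] dvd p1" "[:-x, 1:] dvd q1" by (simp_all add: poly_eq_0_iff_dvd)
    then have "is_unit [:-x, 1:]" using cop coprime_common_divisor by blast
    then show False by (simp add: is_unit_iff_degree)
  qed
  moreover have "degree (q1^2) \<le> degree E"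
    using deg_sq_le[of q1 p1] degree_power_le[of q1 2] unfolding E_def by simp
  moreover have "1 / (1 + h^2) = to_fract (q1^2) / to_fract E"
    unfolding h E_def using q10 by (simp add: field_simps power2_eq_square)
  ultimately show ?case unfolding inH_def by blast
next
  case (add a b)
  then obtain P1 E1 P2 E2 where r: "E1 \<in> Gamma" "degree P1 \<le> degree E1" "a = to_fract P1 / to_fract E1"
     "E2 \<in> Gamma" "degree P2 \<le> degree E2" "b = to_fract P2 / to_fract E2"
    unfolding inH_def by blast
  have n: "E1 \<noteq> 0" "E2 \<noteq> 0" using r Gamma_nonzero by auto
  have "a + b = to_fract (P1 * E2 + P2 * E1) / to_fract (E1 * E2)" using r n by (simp add: field_simps)
  moreover have "degree (P1 * E2 + P2 * E1) \<le> degree (E1 * E2)"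
  proof -
    have "degree (P1 * E2) \<le> degree (E1 * E2)" "degree (P2 * E1) \<le> degree (E1 * E2)"
      using degree_mult_le[of P1 E2] degree_mult_le[of P2 E1] degree_mult_eq[OF n] r by auto
    then show ?thesis using degree_add_le by blast
  qed
  ultimately show ?case using Gamma_mult r unfolding inH_def by blast
next
  case (neg a)
  then obtain P E where r: "E \<in> Gamma" "degree P \<le> degree E" "a = to_fract P / to_fract E"
    unfolding inH_def by blast
  then have "- a = to_fract (-P) / to_fract E" by simp
  then show ?case using r unfolding inH_def by (metis degree_minus)
next
  case (mult a b)
  then obtain P1 E1 P2 E2 where r: "E1 \<in> Gamma" "degree P1 \<le> degree E1" "a = to_fract P1 / to_fract E1"
     "E2 \<in> Gamma" "degree P2 \<le> degree E2" "b = to_fract P2 / to_fract E2"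
    unfolding inH_def by blast
  have n: "E1 \<noteq> 0" "E2 \<noteq> 0" using r Gamma_nonzero by auto
  have "a * b = to_fract (P1 * P2) / to_fract (E1 * E2)" using r by simp
  moreover have "degree (P1 * P2) \<le> degree (E1 * E2)"
    using degree_mult_le[of P1 P2] degree_mult_eq[OF n] r by auto
  ultimately show ?case using Gamma_mult r unfolding inH_def by blast
qed



lemma common_denom:
  assumes "inH x" "inH y"
  shows "\<exists>X Y E. E \<in> Gamma \<and> degree X \<le> degree E \<and> degree Y \<le> degree E \<and>
           x = to_fract X / to_fract E \<and> y = to_fract Y / to_fract E"
proof -
  obtain P1 E1 P2 E2 where r: "E1 \<in> Gamma" "degree P1 \<le> degree E1" "x = to_fract P1 / to_fract E1"
     "E2 \<in> Gamma" "degree P2 \<le> degree E2" "y = to_fract P2 / to_fract E2"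
    using assms unfolding inH_def by blast
  have n: "E1 \<noteq> 0" "E2 \<noteq> 0" using r Gamma_nonzero by auto
  have "x = to_fract (P1 * E2) / to_fract (E1 * E2)" "y = to_fract (P2 * E1) / to_fract (E1 * E2)"
    using r n by simp_all
  moreover have "degree (P1 * E2) \<le> degree (E1 * E2)" "degree (P2 * E1) \<le> degree (E1 * E2)"
    using degree_mult_le[of P1 E2] degree_mult_le[of P2 E1] degree_mult_eq[OF n] r by auto
  ultimately show ?thesis using Gamma_mult[OF r(1) r(4)] by blast
qed

lemma coprime_split:
  fixes F G X Y :: "real poly"
  assumes "coprime F G" "F * Y = X * G"
  shows "\<exists>T. X = F * T \<and> Y = G * T"
proof (cases "F = 0")
  case True
  then have u: "is_unit G" using assms(1) by simp
  then have "G \<noteq> 0" by auto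
  then have "X = 0" using assms(2) True by simp
  moreover have "Y = G * (Y div G)" using dvd_mult_div_cancel[OF unit_imp_dvd[OF u]] by simp
  ultimately show ?thesis using True by auto
next
  case False
  have "F dvd X * G" using assms(2) by (metis dvd_triv_left)
  then have "F dvd X" using assms(1) coprime_dvd_mult_left_iff by blast
  then obtain T where X: "X = F * T" by blast
  then have "Y = G * T" using assms(2) False by (simp add: ac_simps)
  then show ?thesis using X by blast
qed

lemma sumsq_Gamma:
  fixes p q :: "real poly"
  assumes cop: "coprime p q"
  shows "p^2 + q^2 \<in> Gamma"
  unfolding Gamma_def
proof (safe)
  fix x assume "poly (p^2 + q^2) x = 0"
  then have "poly q x = 0 \<and> poly p x = 0"
    by (simp add: sum_power2_eq_zero_iff)
  then have "[:-x, 1:] dvd p" "[:-x, 1:] dvd q" by (simp_all add: poly_eq_0_iff_dvd)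
  then have "is_unit [:-x, 1:]" using cop coprime_common_divisor by blast
  then show False by (simp add: is_unit_iff_degree)
qed

lemma field_aux:
  fixes f g r m gm :: "'a::field"
  assumes "f^2 + g^2 \<noteq> 0"
  shows "(f*r/(f^2+g^2))*(m*f/gm) + (g*r/(f^2+g^2))*(m*g/gm) = m*r/gm"
proof -
  have "(f*r/(f^2+g^2))*(m*f/gm) + (g*r/(f^2+g^2))*(m*g/gm) = ((f^2+g^2) * (m*r)) / ((f^2+g^2) * gm)"
    by (simp add: power2_eq_square algebra_simps add_divide_distrib)
  also have "\<dots> = m*r/gm" using assms by simp
  finally show ?thesis .
qed

theorem proposition2p4:
  fixes f g \<gamma> :: "real poly"
  assumes "f \<noteq> 0 \<or> g \<noteq> 0"
    and "\<gamma> \<in> Gamma"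
    and "to_fract f / to_fract \<gamma> \<in> dress_ring"
    and "to_fract g / to_fract \<gamma> \<in> dress_ring"
  shows "\<not> dress_principal (dress_ideal2 (to_fract f / to_fract \<gamma>) (to_fract g / to_fract \<gamma>))
         \<longleftrightarrow> odd (max (degree (f div gcd f g)) (degree (g div gcd f g)))"
proof -
  define M where "M = gcd f g"
  define F where "F = f div M"
  define G where "G = g div M"
  define s where "s = max (degree F) (degree G)"
  define u where "u = to_fract f / to_fract \<gamma>"
  define v where "v = to_fract g / to_fract \<gamma>"
  have M0: "M \<noteq> 0" unfolding M_def using assms(1) by simp
  have fM: "f = M * F" unfolding F_def M_def by simp
  have gM: "g = M * G" unfolding G_def M_def by simp
  have cop: "coprime F G" unfolding F_def G_def M_def using div_gcd_coprime[OF assms(1)] .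
  have FG0: "F \<noteq> 0 \<or> G \<noteq> 0" using cop by auto
  have g0: "\<gamma> \<noteq> 0" using Gamma_nonzero[OF assms(2)] .
  have uD: "u \<in> D" and vD: "v \<in> D" using assms(3,4) unfolding u_def v_def by auto
  have tu: "u = to_fract M * to_fract F / to_fract \<gamma>" unfolding u_def fM by simp
  have tv: "v = to_fract M * to_fract G / to_fract \<gamma>" unfolding v_def gM by simp
  have even_imp: "dress_principal (dress_ideal2 u v)" if "even s"
  proof -
    obtain k where k: "s = 2 * k" using \<open>even s\<close> by blast
    define \<rho> where "\<rho> = [:1,0,1::real:]^k"
    have \<rho>G: "\<rho> \<in> Gamma"
    proof -
      have "poly \<rho> x = (1 + x*x)^k" for x unfolding \<rho>_def by (simp add: poly_power)
      moreover have "(1 + x*x)^k > 0" for x :: real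
        by (simp add: add_pos_nonneg)
      ultimately show ?thesis unfolding Gamma_def mem_Collect_eq by (metis less_irrefl)
    qed
    have d\<rho>: "degree \<rho> = 2 * k" unfolding \<rho>_def by (simp add: degree_power_eq)
    have \<rho>0: "\<rho> \<noteq> 0" using Gamma_nonzero[OF \<rho>G] .
    define Q where "Q = F^2 + G^2"
    have QG: "Q \<in> Gamma" unfolding Q_def using sumsq_Gamma[OF cop] .
    have Q0: "Q \<noteq> 0" using Gamma_nonzero[OF QG] .
    have dQ: "2 * s \<le> degree Q"
      using deg_sq_le[of F G] deg_sq_le[of G F] unfolding Q_def s_def by (simp add: add.commute)
    have dF: "degree F \<le> s" "degree G \<le> s" unfolding s_def by auto
    define a0 where "a0 = to_fract (F * \<rho>) / to_fract Q"
    define b0 where "b0 = to_fract (G * \<rho>) / to_fract Q"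
    define xf where "xf = to_fract F / to_fract \<rho>"
    define xg where "xg = to_fract G / to_fract \<rho>"
    have a0D: "a0 \<in> D" unfolding a0_def
      by (rule HD[OF QG]) (use degree_mult_le[of F \<rho>] d\<rho> dQ dF k in linarith)
    have b0D: "b0 \<in> D" unfolding b0_def
      by (rule HD[OF QG]) (use degree_mult_le[of G \<rho>] d\<rho> dQ dF k in linarith)
    have xfD: "xf \<in> D" unfolding xf_def by (rule HD[OF \<rho>G]) (use d\<rho> dF k in linarith)
    have xgD: "xg \<in> D" unfolding xg_def by (rule HD[OF \<rho>G]) (use d\<rho> dF k in linarith)
    define c where "c = a0 * u + b0 * v"
    have cD: "c \<in> D" unfolding c_def using a0D b0D uD vD by (intro dress_ring.add dress_ring.mult)
    have tQ: "to_fract Q = to_fract F ^ 2 + to_fract G ^ 2" unfolding Q_def by (simp add: power2_eq_square)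
    have tQ0: "to_fract F ^ 2 + to_fract G ^ 2 \<noteq> 0" using Q0 tQ by (metis to_fract_eq_0_iff)
    have hc: "c = to_fract M * to_fract \<rho> / to_fract \<gamma>"
      unfolding c_def a0_def b0_def tu tv tQ to_fract_mult
      using field_aux[OF tQ0, of "to_fract \<rho>" "to_fract M" "to_fract \<gamma>"] by (simp add: ac_simps)
    have ux: "u = xf * c" unfolding hc xf_def tu using \<rho>0 by simp
    have vx: "v = xg * c" unfolding hc xg_def tv using \<rho>0 by simp
    have "dress_ideal2 u v = {a * c | a. a \<in> D}"
    proof (intro equalityI subsetI)
      fix z assume "z \<in> dress_ideal2 u v"
      then obtain a b where ab: "a \<in> D" "b \<in> D" "z = a * u + b * v" unfolding dress_ideal2_def by blast
      then have "z = (a * xf + b * xg) * c" unfolding ux vx by (simp add: algebra_simps)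
      moreover have "a * xf + b * xg \<in> D" using ab xfD xgD by (intro dress_ring.add dress_ring.mult)
      ultimately show "z \<in> {a * c | a. a \<in> D}" by blast
    next
      fix z assume "z \<in> {a * c | a. a \<in> D}"
      then obtain a where a: "a \<in> D" "z = a * c" by blast
      then have "z = (a * a0) * u + (a * b0) * v" unfolding c_def by (simp add: algebra_simps)
      moreover have "a * a0 \<in> D" "a * b0 \<in> D" using a a0D b0D by (auto intro: dress_ring.mult)
      ultimately show "z \<in> dress_ideal2 u v" unfolding dress_ideal2_def by blast
    qed
    then show ?thesis unfolding dress_principal_def using cD by blast
  qed
  have princ_imp: "even s" if P: "dress_principal (dress_ideal2 u v)"
  proof -
    obtain c where cD: "c \<in> D" and I: "dress_ideal2 u v = {a * c | a. a \<in> D}"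
      using P unfolding dress_principal_def by blast
    have "u \<in> dress_ideal2 u v" unfolding dress_ideal2_def using D_0 D_1 by force
    then obtain x where x: "x \<in> D" "u = x * c" using I by blast
    have "v \<in> dress_ideal2 u v" unfolding dress_ideal2_def using D_0 D_1 by force
    then obtain y where y: "y \<in> D" "v = y * c" using I by blast
    have "c \<in> dress_ideal2 u v" using I D_1 by force
    then obtain a b where ab: "a \<in> D" "b \<in> D" "c = a * u + b * v" unfolding dress_ideal2_def by blast
    have c0: "c \<noteq> 0"
    proof
      assume "c = 0"
      then have "u = 0" "v = 0" using x y by auto
      then have "f = 0" "g = 0" unfolding u_def v_def using g0 by auto
      then show False using assms(1) by simp
    qed
    have "(a * x + b * y) * c = 1 * c" using ab(3) x(2) y(2) by (simp add: algebra_simps)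
    then have axby: "a * x + b * y = 1" using c0 by simp
    have "u * y = x * v" using x y by simp
    then have "to_fract M * (to_fract F * y) = to_fract M * (x * to_fract G)"
      unfolding tu tv using g0 by (simp add: field_simps)
    then have Fy: "to_fract F * y = x * to_fract G" using M0 by simp
    obtain X Y E where XYE: "E \<in> Gamma" "degree X \<le> degree E" "degree Y \<le> degree E"
       "x = to_fract X / to_fract E" "y = to_fract Y / to_fract E"
      using common_denom[OF DH[OF x(1)] DH[OF y(1)]] by blast
    obtain A B E' where ABE: "E' \<in> Gamma" "degree A \<le> degree E'" "degree B \<le> degree E'"
       "a = to_fract A / to_fract E'" "b = to_fract B / to_fract E'"
      using common_denom[OF DH[OF ab(1)] DH[OF ab(2)]] by blast
    have E0: "E \<noteq> 0" "E' \<noteq> 0" using XYE(1) ABE(1) Gamma_nonzero by auto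
    have "to_fract (F * Y) = to_fract (X * G)" using Fy E0 unfolding XYE by (simp add: field_simps)
    then have eq1: "F * Y = X * G" by (rule to_fract_eq_iff[THEN iffD1])
    have "to_fract (A * X + B * Y) = to_fract (E' * E)" using axby E0 unfolding XYE ABE
      by (simp add: field_simps)
    then have eq2: "A * X + B * Y = E' * E" by (rule to_fract_eq_iff[THEN iffD1])
    obtain T where T: "X = F * T" "Y = G * T" using coprime_split[OF cop eq1] by blast
    have eq3: "E' * E = (A * F + B * G) * T" using eq2 unfolding T by (simp add: algebra_simps)
    have TG: "T \<in> Gamma" using Gamma_factor[OF Gamma_mult[OF ABE(1) XYE(1)] eq3] .
    have T0: "T \<noteq> 0" using Gamma_nonzero[OF TG] .
    have S0: "A * F + B * G \<noteq> 0" using eq3 E0 by auto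
    have evT: "even (degree T)" using Gamma_even[OF TG] .
    have evE: "even (degree E)" using Gamma_even[OF XYE(1)] .
    have dT: "degree T \<le> degree E"
    proof (cases "F = 0")
      case True
      then have "G \<noteq> 0" using FG0 by simp
      then show ?thesis using XYE(3) degree_mult_eq[OF \<open>G \<noteq> 0\<close> T0] T(2) by simp
    next
      case False
      then show ?thesis using XYE(2) degree_mult_eq[OF False T0] T(1) by simp
    qed
    have dF: "degree F + degree T \<le> degree E"
    proof (cases "F = 0")
      case False
      then show ?thesis using XYE(2) degree_mult_eq[OF False T0] T(1) by simp
    qed (use dT in simp)
    have dG: "degree G + degree T \<le> degree E"
    proof (cases "G = 0")
      case False
      then show ?thesis using XYE(3) degree_mult_eq[OF False T0] T(2) by simp
    qed (use dT in simp)
    have "degree E' + degree E = degree (A * F + B * G) + degree T"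
      using eq3 degree_mult_eq[OF E0(2) E0(1)] degree_mult_eq[OF S0 T0] by simp
    moreover have "degree (A * F + B * G) \<le> degree E' + s"
    proof -
      have "degree (A * F) \<le> degree E' + s" using degree_mult_le[of A F] ABE(2) unfolding s_def by simp
      moreover have "degree (B * G) \<le> degree E' + s" using degree_mult_le[of B G] ABE(3) unfolding s_def by simp
      ultimately show ?thesis using degree_add_le by blast
    qed
    ultimately have "degree E \<le> s + degree T" by simp
    moreover have "s + degree T \<le> degree E" using dF dG unfolding s_def by simp
    ultimately have "degree E = s + degree T" by simp
    then show ?thesis using evT evE by simp
  qed
  show ?thesis
    using even_imp princ_imp unfolding u_def v_def s_def F_def G_def M_def by blast
qed


end
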